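(* Assume Assumption 1. Given a parametrized class $\mathcal G=\{g_\theta:\theta\in\Theta\}$, the model of data-generating distributions of $(X,T,Y)$ for which the class is correctly specified for the surrogate loss, i.e. for which $$\mathcal G\cap\Big(\operatorname*{argmin}_{g\ \text{unconstrained}}\mathbb E\big[|\psi|\, l(g(X),\operatorname{sign}(\psi))\big]\Big)\neq\varnothing$$ (argmin over all measurable $g:\mathcal X\to\mathbb R$), is given by all distributions on $(X,T,Y)$ for which there exists $\theta^*\in\Theta$ satisfying $$\frac{P(\psi>0\mid X)}{\mathbb E[|\psi|\mid X]}=\sigma(g_{\theta^*}(X))\quad\text{almost surely}.$$
   Context: $X$ is a context taking values in a space $\mathcal X$, $T\in\{-1,1\}$ is a treatment, $Y\in\mathbb R$ is an outcome, and $Y(-1),Y(1)$ are potential outcomes with $Y=Y(T)$ and $Y(t)\perp T\mid X$ for each $t$. A score variable $\psi$ is a real-valued random variable depending on observables. Assumption 1: $\mathbb E[\psi\mid X]=\mathbb E[Y(1)-Y(-1)\mid X]$ almost surely and $\mathbb E[|\psi|]<\infty$. $\Theta\subseteq\mathbb R^d$ and each $g_\theta:\mathcal X\to\mathbb R$ is measurable. The logistic surrogate loss is $l(g,s)=2\log(1+\exp(g))-(s+1)g$ for $g\in\mathbb R$, $s\in\{-1,1\}$, and $\sigma(g)=\exp(g)/(1+\exp(g))$. *)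

theory Defs
  imports "HOL-Probability.Probability"
begin

definition sigmoid :: "real \<Rightarrow> real" where
  "sigmoid g = exp g / (1 + exp g)"

definition logistic_loss :: "real \<Rightarrow> real \<Rightarrow> real" where
  "logistic_loss g s = 2 * ln (1 + exp g) - (s + 1) * g"

definition sigma_X :: "'a measure \<Rightarrow> 'x measure \<Rightarrow> ('a \<Rightarrow> 'x) \<Rightarrow> 'a measure" where
  "sigma_X M MX X = vimage_algebra (space M) X MX"

definition cond_exp_X :: "'a measure \<Rightarrow> 'x measure \<Rightarrow> ('a \<Rightarrow> 'x) \<Rightarrow> ('a \<Rightarrow> real) \<Rightarrow> ('a \<Rightarrow> real)" where
  "cond_exp_X M MX X f = real_cond_exp M (sigma_X M MX X) f"

definition cond_indep_X :: "'a measure \<Rightarrow> 'x measure \<Rightarrow> ('a \<Rightarrow> 'x) \<Rightarrow> ('a \<Rightarrow> real) \<Rightarrow> ('a \<Rightarrow> real) \<Rightarrow> bool" where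
  "cond_indep_X M MX X U V \<longleftrightarrow>
     (\<forall>A \<in> sets borel. \<forall>B \<in> sets borel.
        AE \<omega> in M. cond_exp_X M MX X (\<lambda>w. indicator A (U w) * indicator B (V w)) \<omega>
                    = cond_exp_X M MX X (\<lambda>w. indicator A (U w)) \<omega> *
                      cond_exp_X M MX X (\<lambda>w. indicator B (V w)) \<omega>)"

text \<open>Population surrogate risk E[ |psi| l(g(X), sign psi) ] (a nonnegative integrand,
  so taken as a nonnegative integral with values in [0, infinity]).\<close>
definition surrogate_risk :: "'a measure \<Rightarrow> ('a \<Rightarrow> 'x) \<Rightarrow> ('a \<Rightarrow> real) \<Rightarrow> ('x \<Rightarrow> real) \<Rightarrow> ennreal" where
  "surrogate_risk M X \<psi> g = (\<integral>\<^sup>+ \<omega>. ennreal (\<bar>\<psi> \<omega>\<bar> * logistic_loss (g (X \<omega>)) (sgn (\<psi> \<omega>))) \<partial>M)"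

definition surrogate_argmin :: "'a measure \<Rightarrow> 'x measure \<Rightarrow> ('a \<Rightarrow> 'x) \<Rightarrow> ('a \<Rightarrow> real) \<Rightarrow> ('x \<Rightarrow> real) set" where
  "surrogate_argmin M MX X \<psi> =
     {g \<in> borel_measurable MX. \<forall>g' \<in> borel_measurable MX.
        surrogate_risk M X \<psi> g \<le> surrogate_risk M X \<psi> g'}"

end

theory Submission
  imports Defs
begin

definition phi :: "real \<Rightarrow> real \<Rightarrow> real \<Rightarrow> real" where
  "phi a b t = a * logistic_loss t 1 + b * logistic_loss t (-1)"

lemma one_exp_pos: "0 < 1 + exp (t::real)" by (simp add: add_pos_pos)
lemma one_exp_ne: "1 + exp (t::real) \<noteq> 0" using one_exp_pos[of t] by linarith

lemma sigmoid_alt: "sigmoid t = 1 / (1 + exp (-t))"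
  unfolding sigmoid_def by (simp add: exp_minus field_simps)

lemma sigmoid_pos: "0 < sigmoid t" unfolding sigmoid_def by (simp add: add_pos_pos)
lemma sigmoid_lt1: "sigmoid t < 1" unfolding sigmoid_def using one_exp_pos[of t] by simp

lemma sigmoid_strict_mono: "x < y \<Longrightarrow> sigmoid x < sigmoid y"
  unfolding sigmoid_alt by (simp add: divide_strict_left_mono add_pos_pos)

lemma sigmoid_mono: "x \<le> y \<Longrightarrow> sigmoid x \<le> sigmoid y"
  using sigmoid_strict_mono[of x y] by (cases "x = y") auto

lemma sigmoid_logit: "0 < r \<Longrightarrow> r < 1 \<Longrightarrow> sigmoid (ln (r / (1 - r))) = r"
  unfolding sigmoid_def by (simp add: field_simps one_exp_ne)

lemma loss1: "logistic_loss t 1 = - 2 * ln (sigmoid t)"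
  unfolding logistic_loss_def sigmoid_def
  using one_exp_ne[of t] one_exp_pos[of t] by (simp add: ln_div)

lemma loss2: "logistic_loss t (-1) = - 2 * ln (1 - sigmoid t)"
proof -
  have "1 - sigmoid t = 1 / (1 + exp t)" unfolding sigmoid_def using one_exp_ne[of t] by (simp add: field_simps)
  then show ?thesis unfolding logistic_loss_def by (simp add: ln_div add_pos_pos)
qed

lemma loss1_nn: "0 \<le> logistic_loss t 1"
  unfolding loss1 using sigmoid_pos[of t] sigmoid_lt1[of t] by simp
lemma loss2_nn: "0 \<le> logistic_loss t (-1)"
  unfolding loss2 using sigmoid_pos[of t] sigmoid_lt1[of t] by simp

lemma phi_nn: "0 \<le> a \<Longrightarrow> 0 \<le> b \<Longrightarrow> 0 \<le> phi a b t"
  unfolding phi_def using loss1_nn loss2_nn by simp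

lemma gibbs:
  fixes p q :: real
  assumes "0 < p" "p < 1" "0 < q" "q < 1"
  shows "p * ln q + (1 - p) * ln (1 - q) \<le> p * ln p + (1 - p) * ln (1 - p)"
proof -
  have 1: "ln (q / p) \<le> q / p - 1" using assms by (intro ln_le_minus_one) simp
  have 2: "ln ((1 - q) / (1 - p)) \<le> (1 - q) / (1 - p) - 1" using assms by (intro ln_le_minus_one) simp
  have "p * ln (q / p) \<le> p * (q / p - 1)" using 1 assms by (intro mult_left_mono) auto
  moreover have "(1 - p) * ln ((1 - q) / (1 - p)) \<le> (1 - p) * ((1 - q) / (1 - p) - 1)"
    using 2 assms by (intro mult_left_mono) auto
  moreover have "p * (q / p - 1) + (1 - p) * ((1 - q) / (1 - p) - 1) = 0" using assms by (simp add: field_simps)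
  ultimately have "p * ln (q / p) + (1 - p) * ln ((1 - q) / (1 - p)) \<le> 0" by linarith
  then show ?thesis using assms by (simp add: ln_div algebra_simps)
qed

lemma phi_min:
  assumes a: "0 \<le> a" and b: "0 \<le> b" and h: "a + b \<noteq> 0 \<longrightarrow> a / (a + b) = sigmoid s"
  shows "phi a b s \<le> phi a b t"
proof (cases "a + b = 0")
  case True then have "a = 0" "b = 0" using a b by auto
  then show ?thesis unfolding phi_def by simp
next
  case False
  then have ab: "a + b > 0" using a b by auto
  define p where "p = sigmoid s"
  define q where "q = sigmoid t"
  have ap: "a = (a + b) * p" using h False ab unfolding p_def by (simp add: field_simps)
  have bp: "b = (a + b) * (1 - p)" using ap by (simp add: algebra_simps)
  have "p * ln q + (1 - p) * ln (1 - q) \<le> p * ln p + (1 - p) * ln (1 - p)"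
    unfolding p_def q_def using sigmoid_pos sigmoid_lt1 by (intro gibbs) auto
  then have "(a + b) * (p * ln q + (1 - p) * ln (1 - q)) \<le> (a + b) * (p * ln p + (1 - p) * ln (1 - p))"
    using ab by (intro mult_left_mono) auto
  then have "a * ln q + b * ln (1 - q) \<le> a * ln p + b * ln (1 - p)"
    by (subst (1 2) ap, subst (1 2) bp) (simp add: algebra_simps)
  then show ?thesis unfolding phi_def loss1 loss2 p_def q_def by simp
qed

lemma phi_deriv: "(phi a b has_real_derivative (2 * (a + b) * sigmoid x - 2 * a)) (at x)"
proof -
  have "((\<lambda>t. a * (2 * ln (1 + exp t) - (1 + 1) * t) + b * (2 * ln (1 + exp t) - (-1 + 1) * t))
     has_real_derivative (a * (2 * (exp x / (1 + exp x)) - 2) + b * (2 * (exp x / (1 + exp x))))) (at x)"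
    apply (rule derivative_eq_intros refl | simp add: one_exp_pos one_exp_ne)+
    apply (simp add: algebra_simps times_divide_eq_right[symmetric] del: times_divide_eq_right)
    done
  moreover have "(\<lambda>t. a * (2 * ln (1 + exp t) - (1 + 1) * t) + b * (2 * ln (1 + exp t) - (-1 + 1) * t)) = phi a b"
    unfolding phi_def logistic_loss_def by (auto simp: fun_eq_iff)
  moreover have "a * (2 * (exp x / (1 + exp x)) - 2) + b * (2 * (exp x / (1 + exp x))) = 2 * (a + b) * sigmoid x - 2 * a"
    unfolding sigmoid_def[symmetric] by (simp add: algebra_simps)
  ultimately show ?thesis by simp
qed

lemma phi_dec:
  assumes ab: "0 < a + b" and tq: "t < q" and s: "sigmoid q * (a + b) < a"
  shows "phi a b q < phi a b t"
proof (rule DERIV_neg_imp_decreasing[OF tq])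
  fix x assume "t \<le> x" "x \<le> q"
  then have "sigmoid x \<le> sigmoid q" by (intro sigmoid_mono)
  then have "sigmoid x * (a + b) < a" using s ab by (meson le_less_trans mult_right_mono less_imp_le)
  then show "\<exists>y. (phi a b has_real_derivative y) (at x) \<and> y < 0"
    using phi_deriv by (intro exI[of _ "2 * (a + b) * sigmoid x - 2 * a"]) (auto simp: algebra_simps)
qed

lemma phi_inc:
  assumes ab: "0 < a + b" and tq: "q < t" and s: "a < sigmoid q * (a + b)"
  shows "phi a b q < phi a b t"
proof (rule DERIV_pos_imp_increasing[OF tq])
  fix x assume "q \<le> x" "x \<le> t"
  then have "sigmoid q \<le> sigmoid x" by (intro sigmoid_mono)
  then have "a < sigmoid x * (a + b)" using s ab by (meson less_le_trans mult_right_mono less_imp_le)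
  then show "\<exists>y. (phi a b has_real_derivative y) (at x) \<and> 0 < y"
    using phi_deriv by (intro exI[of _ "2 * (a + b) * sigmoid x - 2 * a"]) (auto simp: algebra_simps)
qed

lemma tower:
  assumes sf: "sigma_finite_subalgebra M F" and int: "integrable M f" and fnn: "\<And>x. 0 \<le> f x"
    and hF: "h \<in> borel_measurable F" and hnn: "\<And>x. 0 \<le> h x"
  shows "(\<integral>\<^sup>+x. ennreal (f x * h x) \<partial>M) = (\<integral>\<^sup>+x. ennreal (real_cond_exp M F f x * h x) \<partial>M)"
proof -
  interpret sigma_finite_subalgebra M F by (rule sf)
  have fM[measurable]: "f \<in> borel_measurable M" using int by auto
  have hM[measurable]: "h \<in> borel_measurable M" by (rule measurable_from_subalg[OF subalg hF])
  have hF'[measurable]: "(\<lambda>x. ennreal (h x)) \<in> borel_measurable F" using hF by measurable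
  have z: "(\<lambda>x. ennreal (- f x)) = (\<lambda>x. 0)" using fnn by (simp add: ennreal_neg fun_eq_iff)
  have "AE x in M. 0 = nn_cond_exp M F (\<lambda>x. 0) x" by (rule nn_cond_exp_F_meas) auto
  then have z2: "AE x in M. nn_cond_exp M F (\<lambda>x. ennreal (- f x)) x = 0" unfolding z by auto
  have "(\<integral>\<^sup>+x. nn_cond_exp M F (\<lambda>x. ennreal (f x)) x \<partial>M) = (\<integral>\<^sup>+x. 1 * nn_cond_exp M F (\<lambda>x. ennreal (f x)) x \<partial>M)"
    by simp
  also have "\<dots> = (\<integral>\<^sup>+x. 1 * ennreal (f x) \<partial>M)"
    by (rule nn_cond_exp_intg) auto
  also have "\<dots> \<noteq> \<infinity>" using integrableD(2)[OF int] fnn by simp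
  finally have "AE x in M. nn_cond_exp M F (\<lambda>x. ennreal (f x)) x \<noteq> \<infinity>"
    by (intro nn_integral_PInf_AE) auto
  with z2 have eq: "AE x in M. ennreal (real_cond_exp M F f x) = nn_cond_exp M F (\<lambda>x. ennreal (f x)) x"
    unfolding real_cond_exp_def by eventually_elim (auto simp: ennreal_enn2real_if)
  have pos: "AE x in M. 0 \<le> real_cond_exp M F f x" by (rule real_cond_exp_pos) (auto simp: fnn)
  have "(\<integral>\<^sup>+x. ennreal (f x * h x) \<partial>M) = (\<integral>\<^sup>+x. ennreal (h x) * ennreal (f x) \<partial>M)"
    using fnn hnn by (simp add: ennreal_mult mult.commute)
  also have "\<dots> = (\<integral>\<^sup>+x. ennreal (h x) * nn_cond_exp M F (\<lambda>x. ennreal (f x)) x \<partial>M)"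
    by (rule nn_cond_exp_intg[symmetric]) auto
  also have "\<dots> = (\<integral>\<^sup>+x. ennreal (real_cond_exp M F f x * h x) \<partial>M)"
    apply (rule nn_integral_cong_AE)
    using eq pos by eventually_elim (simp add: ennreal_mult hnn mult.commute)
  finally show ?thesis .
qed

lemma sfsub:
  assumes "prob_space M" "X \<in> measurable M MX"
  shows "sigma_finite_subalgebra M (sigma_X M MX X)"
proof -
  interpret prob_space M by fact
  have "subalgebra M (sigma_X M MX X)"
    unfolding subalgebra_def sigma_X_def using sets_image_in_sets[OF refl assms(2)] by simp
  then have "finite_measure_subalgebra M (sigma_X M MX X)"
    by (unfold_locales) auto
  then show ?thesis by (rule finite_measure_subalgebra_is_sigma_finite)
qed

lemma final_pt:
  fixes A B t :: real
  assumes A: "0 \<le> A" and B: "0 \<le> B" and AB: "0 < A + B"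
    and h: "\<forall>q\<in>\<rat>. \<not> (t < q \<and> sigmoid q * (A + B) < A) \<and> \<not> (q < t \<and> A < sigmoid q * (A + B))"
  shows "A / (A + B) = sigmoid t"
proof (rule ccontr)
  define r where "r = A / (A + B)"
  define s where "s = sigmoid t"
  have r0: "0 \<le> r" and r1: "r \<le> 1" using A B AB unfolding r_def by auto
  have s0: "0 < s" and s1: "s < 1" unfolding s_def using sigmoid_pos sigmoid_lt1 by auto
  have rA: "\<And>x. x * (A + B) < A \<longleftrightarrow> x < r" "\<And>x. A < x * (A + B) \<longleftrightarrow> r < x"
    unfolding r_def using AB by (auto simp: field_simps)
  assume "A / (A + B) \<noteq> sigmoid t"
  then have "s < r \<or> r < s" unfolding r_def s_def by linarith
  then show False
  proof
    assume sr: "s < r"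
    define r' where "r' = (s + r) / 2"
    have r'01: "0 < r'" "r' < 1" "s < r'" "r' < r" using sr s0 r1 unfolding r'_def by auto
    define y where "y = ln (r' / (1 - r'))"
    have sy: "sigmoid y = r'" unfolding y_def using r'01 by (intro sigmoid_logit) auto
    have ty: "t < y"
    proof (rule ccontr)
      assume "\<not> t < y" then have "sigmoid y \<le> sigmoid t" by (intro sigmoid_mono) auto
      then show False using sy r'01 unfolding s_def by auto
    qed
    obtain q where q: "q \<in> \<rat>" "t < q" "q < y" using Rats_dense_in_real[OF ty] by auto
    have "sigmoid q \<le> sigmoid y" using q by (intro sigmoid_mono) auto
    then have "sigmoid q < r" using sy r'01 by auto
    then show False using h q rA by auto
  next
    assume sr: "r < s"
    define r' where "r' = (s + r) / 2"
    have r'01: "0 < r'" "r' < 1" "r < r'" "r' < s" using sr s1 r0 unfolding r'_def by auto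
    define y where "y = ln (r' / (1 - r'))"
    have sy: "sigmoid y = r'" unfolding y_def using r'01 by (intro sigmoid_logit) auto
    have ty: "y < t"
    proof (rule ccontr)
      assume "\<not> y < t" then have "sigmoid t \<le> sigmoid y" by (intro sigmoid_mono) auto
      then show False using sy r'01 unfolding s_def by auto
    qed
    obtain q where q: "q \<in> \<rat>" "y < q" "q < t" using Rats_dense_in_real[OF ty] by auto
    have "sigmoid y \<le> sigmoid q" using q by (intro sigmoid_mono) auto
    then have "r < sigmoid q" using sy r'01 by auto
    then show False using h q rA by auto
  qed
qed

lemma logistic_loss_measurable[measurable]:
  assumes [measurable]: "f \<in> borel_measurable N"
  shows "(\<lambda>x. logistic_loss (f x) s) \<in> borel_measurable N"
  unfolding logistic_loss_def by measurable

lemma phi_measurable[measurable]: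
  assumes [measurable]: "f \<in> borel_measurable N" "a \<in> borel_measurable N" "b \<in> borel_measurable N"
  shows "(\<lambda>x. phi (a x) (b x) (f x)) \<in> borel_measurable N"
  unfolding phi_def by measurable

lemma loss_split:
  "\<bar>p\<bar> * logistic_loss t (sgn p) = max p 0 * logistic_loss t 1 + max (- p) 0 * logistic_loss t (-1)"
  by (cases "p > 0"; cases "p < 0") auto

theorem lemma1:
  fixes M :: "'a measure" and MX :: "'x measure"
    and X :: "'a \<Rightarrow> 'x" and T Y Y1 Ym \<psi> :: "'a \<Rightarrow> real"
    and h :: "'x \<Rightarrow> real \<Rightarrow> real \<Rightarrow> real"
    and \<Theta> :: "(real ^ 'd) set" and g :: "real ^ 'd \<Rightarrow> 'x \<Rightarrow> real"
  assumes prob: "prob_space M"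
    and X_meas: "X \<in> measurable M MX"
    and T_meas: "T \<in> borel_measurable M"
    and T_vals: "\<forall>\<omega> \<in> space M. T \<omega> \<in> {-1, 1}"
    and Y1_meas: "Y1 \<in> borel_measurable M"
    and Ym_meas: "Ym \<in> borel_measurable M"
    and consistency: "\<forall>\<omega> \<in> space M. Y \<omega> = (if T \<omega> = 1 then Y1 \<omega> else Ym \<omega>)"
    and unconf1: "cond_indep_X M MX X Y1 T"
    and unconfm: "cond_indep_X M MX X Ym T"
    and h_meas: "(\<lambda>(x, t, y). h x t y) \<in> borel_measurable (MX \<Otimes>\<^sub>M borel \<Otimes>\<^sub>M borel)"
    and psi_obs: "\<forall>\<omega> \<in> space M. \<psi> \<omega> = h (X \<omega>) (T \<omega>) (Y \<omega>)"
    and cate_int: "integrable M (\<lambda>\<omega>. Y1 \<omega> - Ym \<omega>)"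
    and A1_cond: "AE \<omega> in M. cond_exp_X M MX X \<psi> \<omega> = cond_exp_X M MX X (\<lambda>w. Y1 w - Ym w) \<omega>"
    and A1_int: "integrable M \<psi>"
    and g_meas: "\<forall>\<theta> \<in> \<Theta>. g \<theta> \<in> borel_measurable MX"
  shows "(\<exists>\<theta> \<in> \<Theta>. g \<theta> \<in> surrogate_argmin M MX X \<psi>) \<longleftrightarrow>
         (\<exists>\<theta> \<in> \<Theta>. AE \<omega> in M.
            cond_exp_X M MX X (\<lambda>w. \<bar>\<psi> w\<bar>) \<omega> \<noteq> 0 \<longrightarrow>
            cond_exp_X M MX X (\<lambda>w. max (\<psi> w) 0) \<omega> / cond_exp_X M MX X (\<lambda>w. \<bar>\<psi> w\<bar>) \<omega>
              = sigmoid (g \<theta> (X \<omega>)))"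
proof -
  interpret prob_space M by (rule prob)
  define F where "F = sigma_X M MX X"
  have sf: "sigma_finite_subalgebra M F" unfolding F_def by (rule sfsub[OF prob X_meas])
  interpret sf: sigma_finite_subalgebra M F by (rule sf)
  note X_meas[measurable]
  have XF[measurable]: "X \<in> measurable F MX"
    unfolding F_def sigma_X_def using measurable_space[OF X_meas]
    by (intro measurable_vimage_algebra1) auto
  have spF: "space F = space M" unfolding F_def sigma_X_def by simp
  have setsF: "sets F = {X -` A \<inter> space M | A. A \<in> sets MX}"
    unfolding F_def sigma_X_def using measurable_space[OF X_meas]
    by (intro sets_vimage_algebra2) auto
  have psiM[measurable]: "\<psi> \<in> borel_measurable M" using A1_int by auto
  define pp where "pp = (\<lambda>w. max (\<psi> w) 0)"
  define pm where "pm = (\<lambda>w. max (- \<psi> w) 0)"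
  have ipp: "integrable M pp" unfolding pp_def using A1_int by auto
  have ipm: "integrable M pm" unfolding pm_def using A1_int by auto
  have ppM[measurable]: "pp \<in> borel_measurable M" and pmM[measurable]: "pm \<in> borel_measurable M"
    unfolding pp_def pm_def by auto
  have ppn: "\<And>w. 0 \<le> pp w" and pmn: "\<And>w. 0 \<le> pm w" unfolding pp_def pm_def by auto
  define a where "a = real_cond_exp M F pp"
  define b where "b = real_cond_exp M F pm"
  define c where "c = real_cond_exp M F (\<lambda>w. \<bar>\<psi> w\<bar>)"
  have aF[measurable]: "a \<in> borel_measurable F" and bF[measurable]: "b \<in> borel_measurable F"
    unfolding a_def b_def by auto
  have aM[measurable]: "a \<in> borel_measurable M" and bM[measurable]: "b \<in> borel_measurable M"
    unfolding a_def b_def by auto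
  have abs_eq: "(\<lambda>w. \<bar>\<psi> w\<bar>) = (\<lambda>w. pp w + pm w)" unfolding pp_def pm_def by (auto simp: fun_eq_iff)
  have cab: "AE w in M. c w = a w + b w"
    unfolding c_def a_def b_def abs_eq by (rule sf.real_cond_exp_add[OF ipp ipm])
  have a0: "AE w in M. 0 \<le> a w" unfolding a_def by (rule sf.real_cond_exp_pos) (auto simp: ppn ipp)
  have b0: "AE w in M. 0 \<le> b w" unfolding b_def by (rule sf.real_cond_exp_pos) (auto simp: pmn ipm)
  have cex: "cond_exp_X M MX X (\<lambda>w. max (\<psi> w) 0) = a" "cond_exp_X M MX X (\<lambda>w. \<bar>\<psi> w\<bar>) = c"
    unfolding cond_exp_X_def a_def c_def F_def pp_def by auto
  have risk: "surrogate_risk M X \<psi> H = (\<integral>\<^sup>+w. ennreal (phi (a w) (b w) (H (X w))) \<partial>M)"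
    if H[measurable]: "H \<in> borel_measurable MX" for H
  proof -
    have HF[measurable]: "(\<lambda>w. logistic_loss (H (X w)) s) \<in> borel_measurable F" for s by measurable
    have "surrogate_risk M X \<psi> H = (\<integral>\<^sup>+w. ennreal (pp w * logistic_loss (H (X w)) 1)
        + ennreal (pm w * logistic_loss (H (X w)) (-1)) \<partial>M)"
      unfolding surrogate_risk_def
      by (rule nn_integral_cong) (simp add: loss_split pp_def pm_def loss1_nn loss2_nn)
    also have "\<dots> = (\<integral>\<^sup>+w. ennreal (pp w * logistic_loss (H (X w)) 1) \<partial>M)
        + (\<integral>\<^sup>+w. ennreal (pm w * logistic_loss (H (X w)) (-1)) \<partial>M)"
      by (rule nn_integral_add) (auto simp: pp_def pm_def)
    also have "\<dots> = (\<integral>\<^sup>+w. ennreal (a w * logistic_loss (H (X w)) 1) \<partial>M)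
        + (\<integral>\<^sup>+w. ennreal (b w * logistic_loss (H (X w)) (-1)) \<partial>M)"
      unfolding a_def b_def
      by (subst tower[OF sf ipp ppn HF loss1_nn], subst tower[OF sf ipm pmn HF loss2_nn]) (rule refl)
    also have "\<dots> = (\<integral>\<^sup>+w. ennreal (a w * logistic_loss (H (X w)) 1)
        + ennreal (b w * logistic_loss (H (X w)) (-1)) \<partial>M)"
      by (rule nn_integral_add[symmetric]) auto
    also have "\<dots> = (\<integral>\<^sup>+w. ennreal (phi (a w) (b w) (H (X w))) \<partial>M)"
      apply (rule nn_integral_cong_AE)
      using a0 b0 by eventually_elim (unfold phi_def, rule ennreal_plus[symmetric], simp_all add: loss1_nn loss2_nn)
    finally show ?thesis .
  qed
  show ?thesis
  proof
    assume "\<exists>\<theta>\<in>\<Theta>. g \<theta> \<in> surrogate_argmin M MX X \<psi>"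
    then obtain \<theta> where th: "\<theta> \<in> \<Theta>" and Gmin: "g \<theta> \<in> surrogate_argmin M MX X \<psi>" by auto
    define G where "G = g \<theta>"
    have GM[measurable]: "G \<in> borel_measurable MX" using Gmin unfolding G_def surrogate_argmin_def by auto
    have Gle: "\<And>H. H \<in> borel_measurable MX \<Longrightarrow> surrogate_risk M X \<psi> G \<le> surrogate_risk M X \<psi> H"
      using Gmin unfolding G_def surrogate_argmin_def by auto
    have "surrogate_risk M X \<psi> G \<le> surrogate_risk M X \<psi> (\<lambda>_. 0)" by (rule Gle) auto
    also have "\<dots> = (\<integral>\<^sup>+w. ennreal (norm (2 * ln 2 * \<bar>\<psi> w\<bar>)) \<partial>M)"
      unfolding surrogate_risk_def by (rule nn_integral_cong) (simp add: logistic_loss_def abs_mult)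
    also have "\<dots> < \<infinity>" using integrableD(2)[of M "\<lambda>w. 2 * ln 2 * \<bar>\<psi> w\<bar>"] A1_int
      by (simp add: top.not_eq_extremum)
    finally have fin: "(\<integral>\<^sup>+w. ennreal (phi (a w) (b w) (G (X w))) \<partial>M) \<noteq> \<infinity>"
      using risk[OF GM] by simp
    have key: "AE w in M. phi (a w) (b w) (G (X w)) \<le> phi (a w) (b w) (H (X w))"
      if HM[measurable]: "H \<in> borel_measurable MX"
        and le: "AE w in M. phi (a w) (b w) (H (X w)) \<le> phi (a w) (b w) (G (X w))" for H
    proof (rule ccontr)
      assume nle: "\<not> ?thesis"
      have le': "AE w in M. ennreal (phi (a w) (b w) (H (X w))) \<le> ennreal (phi (a w) (b w) (G (X w)))"
        using le by eventually_elim (rule ennreal_leI)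
      have "(\<integral>\<^sup>+w. ennreal (phi (a w) (b w) (H (X w))) \<partial>M) \<le> (\<integral>\<^sup>+w. ennreal (phi (a w) (b w) (G (X w))) \<partial>M)"
        by (rule nn_integral_mono_AE[OF le'])
      then have finH: "(\<integral>\<^sup>+w. ennreal (phi (a w) (b w) (H (X w))) \<partial>M) \<noteq> \<infinity>"
        using fin by (auto simp: top_unique)
      have "\<not> (AE w in M. ennreal (phi (a w) (b w) (G (X w))) \<le> ennreal (phi (a w) (b w) (H (X w))))"
      proof
        assume "AE w in M. ennreal (phi (a w) (b w) (G (X w))) \<le> ennreal (phi (a w) (b w) (H (X w)))"
        then have "AE w in M. phi (a w) (b w) (G (X w)) \<le> phi (a w) (b w) (H (X w))"
          using a0 b0 by eventually_elim (simp add: phi_nn)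
        with nle show False by simp
      qed
      then have "(\<integral>\<^sup>+w. ennreal (phi (a w) (b w) (H (X w))) \<partial>M) < (\<integral>\<^sup>+w. ennreal (phi (a w) (b w) (G (X w))) \<partial>M)"
        by (intro nn_integral_less[OF _ _ finH le']) auto
      then have "surrogate_risk M X \<psi> H < surrogate_risk M X \<psi> G" using risk[OF HM] risk[OF GM] by simp
      with Gle[OF HM] show False by simp
    qed
    have C1: "AE w in M. \<not> (G (X w) < q \<and> sigmoid q * (a w + b w) < a w \<and> 0 < a w + b w)" for q
    proof -
      define S where "S = {w \<in> space M. G (X w) < q \<and> sigmoid q * (a w + b w) < a w \<and> 0 < a w + b w}"
      have "S = {w \<in> space F. G (X w) < q \<and> sigmoid q * (a w + b w) < a w \<and> 0 < a w + b w}"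
        unfolding S_def spF ..
      also have "\<dots> \<in> sets F" by measurable
      finally obtain U where U[measurable]: "U \<in> sets MX" and SU: "S = X -` U \<inter> space M"
        unfolding setsF by auto
      define H where "H = (\<lambda>x. if x \<in> U then q else G x)"
      have HM[measurable]: "H \<in> borel_measurable MX" unfolding H_def by measurable
      have "AE w in M. phi (a w) (b w) (H (X w)) \<le> phi (a w) (b w) (G (X w))"
        using a0 b0 AE_space
      proof eventually_elim
        case (elim w)
        show ?case
        proof (cases "X w \<in> U")
          case True
          then have "w \<in> S" using SU elim by auto
          then show ?thesis unfolding H_def S_def using True by (auto intro!: less_imp_le phi_dec)
        qed (simp add: H_def)
      qed
      from key[OF HM this] a0 b0 AE_space show ?thesis
      proof eventually_elim
        case (elim w)
        show ?case
        proof
          assume w: "G (X w) < q \<and> sigmoid q * (a w + b w) < a w \<and> 0 < a w + b w"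
          then have "w \<in> S" unfolding S_def using elim by auto
          then have "X w \<in> U" using SU by auto
          then have "phi (a w) (b w) (H (X w)) < phi (a w) (b w) (G (X w))"
            unfolding H_def using w by (auto intro!: phi_dec)
          then show False using elim by simp
        qed
      qed
    qed
    have C2: "AE w in M. \<not> (q < G (X w) \<and> a w < sigmoid q * (a w + b w) \<and> 0 < a w + b w)" for q
    proof -
      define S where "S = {w \<in> space M. q < G (X w) \<and> a w < sigmoid q * (a w + b w) \<and> 0 < a w + b w}"
      have "S = {w \<in> space F. q < G (X w) \<and> a w < sigmoid q * (a w + b w) \<and> 0 < a w + b w}"
        unfolding S_def spF ..
      also have "\<dots> \<in> sets F" by measurable
      finally obtain U where U[measurable]: "U \<in> sets MX" and SU: "S = X -` U \<inter> space M"
        unfolding setsF by auto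
      define H where "H = (\<lambda>x. if x \<in> U then q else G x)"
      have HM[measurable]: "H \<in> borel_measurable MX" unfolding H_def by measurable
      have "AE w in M. phi (a w) (b w) (H (X w)) \<le> phi (a w) (b w) (G (X w))"
        using a0 b0 AE_space
      proof eventually_elim
        case (elim w)
        show ?case
        proof (cases "X w \<in> U")
          case True
          then have "w \<in> S" using SU elim by auto
          then show ?thesis unfolding H_def S_def using True by (auto intro!: less_imp_le phi_inc)
        qed (simp add: H_def)
      qed
      from key[OF HM this] a0 b0 AE_space show ?thesis
      proof eventually_elim
        case (elim w)
        show ?case
        proof
          assume w: "q < G (X w) \<and> a w < sigmoid q * (a w + b w) \<and> 0 < a w + b w"
          then have "w \<in> S" unfolding S_def using elim by auto
          then have "X w \<in> U" using SU by auto
          then have "phi (a w) (b w) (H (X w)) < phi (a w) (b w) (G (X w))"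
            unfolding H_def using w by (auto intro!: phi_inc)
          then show False using elim by simp
        qed
      qed
    qed
    have Call: "AE w in M. \<forall>q\<in>\<rat>. \<not> (G (X w) < q \<and> sigmoid q * (a w + b w) < a w \<and> 0 < a w + b w)
       \<and> \<not> (q < G (X w) \<and> a w < sigmoid q * (a w + b w) \<and> 0 < a w + b w)"
      by (rule AE_ball_countable'[OF _ countable_rat]) (use C1 C2 in auto)
    have "AE w in M. c w \<noteq> 0 \<longrightarrow> a w / c w = sigmoid (g \<theta> (X w))"
      using Call cab a0 b0
    proof eventually_elim
      case (elim w)
      show ?case
      proof
        assume "c w \<noteq> 0"
        then have ab: "0 < a w + b w" using elim by auto
        have "a w / (a w + b w) = sigmoid (G (X w))"
          by (rule final_pt) (use elim ab in auto)
        then show "a w / c w = sigmoid (g \<theta> (X w))" using elim unfolding G_def by simp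
      qed
    qed
    then show "\<exists>\<theta>\<in>\<Theta>. AE \<omega> in M.
            cond_exp_X M MX X (\<lambda>w. \<bar>\<psi> w\<bar>) \<omega> \<noteq> 0 \<longrightarrow>
            cond_exp_X M MX X (\<lambda>w. max (\<psi> w) 0) \<omega> / cond_exp_X M MX X (\<lambda>w. \<bar>\<psi> w\<bar>) \<omega>
              = sigmoid (g \<theta> (X \<omega>))"
      unfolding cex using th by auto
  next
    assume "\<exists>\<theta>\<in>\<Theta>. AE \<omega> in M.
            cond_exp_X M MX X (\<lambda>w. \<bar>\<psi> w\<bar>) \<omega> \<noteq> 0 \<longrightarrow>
            cond_exp_X M MX X (\<lambda>w. max (\<psi> w) 0) \<omega> / cond_exp_X M MX X (\<lambda>w. \<bar>\<psi> w\<bar>) \<omega>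
              = sigmoid (g \<theta> (X \<omega>))"
    then obtain \<theta> where th: "\<theta> \<in> \<Theta>"
      and hyp: "AE w in M. c w \<noteq> 0 \<longrightarrow> a w / c w = sigmoid (g \<theta> (X w))"
      unfolding cex by auto
    have GM[measurable]: "g \<theta> \<in> borel_measurable MX" using g_meas th by auto
    have "g \<theta> \<in> surrogate_argmin M MX X \<psi>"
      unfolding surrogate_argmin_def
    proof (intro CollectI conjI ballI GM)
      fix H :: "'x \<Rightarrow> real" assume HM[measurable]: "H \<in> borel_measurable MX"
      show "surrogate_risk M X \<psi> (g \<theta>) \<le> surrogate_risk M X \<psi> H"
        unfolding risk[OF GM] risk[OF HM]
        apply (rule nn_integral_mono_AE)
        using hyp cab a0 b0
      proof eventually_elim
        case (elim w)
        have "phi (a w) (b w) (g \<theta> (X w)) \<le> phi (a w) (b w) (H (X w))"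
          by (rule phi_min) (use elim in auto)
        then show ?case by (rule ennreal_leI)
      qed
    qed
    then show "\<exists>\<theta>\<in>\<Theta>. g \<theta> \<in> surrogate_argmin M MX X \<psi>" using th by auto
  qed
qed

end
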